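(* Let $(M,d)$ be a compact metric space, $\varphi:M\to M$ continuous, and let $f\in B(M)$ be such that for some fixed $n\ge1$, $\epsilon>0$, $\alpha\ge0$, $$\sup_{x\in M}\sup_{y\in B_n(x,\epsilon)}|f(y)-f(x)|\le\alpha.$$ Then there exists a continuous function $g:M\to\mathbb R$ with $\|f-g\|_\infty\le\alpha$.
   Context: $B(M)$: bounded Borel real functions, $\|f\|_\infty=\sup|f|$; $B_n(x,\epsilon)=\{y\in M:d(\varphi^k(y),\varphi^k(x))<\epsilon,\ 0\le k\le n-1\}$. *)

theory Defs
  imports "HOL-Analysis.Analysis"
begin

definition bowen_ball :: "('a::metric_space \<Rightarrow> 'a) \<Rightarrow> 'a set \<Rightarrow> nat \<Rightarrow> 'a \<Rightarrow> real \<Rightarrow> 'a set" where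
  "bowen_ball \<phi> M n x \<epsilon> = {y \<in> M. \<forall>k<n. dist ((\<phi> ^^ k) y) ((\<phi> ^^ k) x) < \<epsilon>}"

end

theory Submission
  imports Defs
begin

lemma funpow_cont:
  assumes "continuous_on M \<phi>" "\<phi> ` M \<subseteq> M"
  shows "continuous_on M (\<phi> ^^ k) \<and> (\<phi> ^^ k) ` M \<subseteq> M"
proof (induction k)
  case 0
  then show ?case by (simp add: continuous_on_id)
next
  case (Suc k)
  then have c: "continuous_on M (\<phi> ^^ k)" and s: "(\<phi> ^^ k) ` M \<subseteq> M" by auto
  have "continuous_on M (\<phi> \<circ> (\<phi> ^^ k))"
    using continuous_on_compose[OF c] continuous_on_subset[OF assms(1) s] by blast
  moreover have "(\<phi> \<circ> (\<phi> ^^ k)) ` M \<subseteq> M" using s assms(2) by auto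
  ultimately show ?case by simp
qed

theorem lemma6p4:
  fixes M :: "'a::metric_space set" and \<phi> :: "'a \<Rightarrow> 'a" and f :: "'a \<Rightarrow> real"
    and n :: nat and \<epsilon> \<alpha> :: real
  assumes "compact M"
    and "continuous_on M \<phi>" and "\<phi> ` M \<subseteq> M"
    and "f \<in> borel_measurable (restrict_space borel M)" and "bounded (f ` M)"
    and "n \<ge> 1" and "\<epsilon> > 0" and "\<alpha> \<ge> 0"
    and "\<forall>x\<in>M. \<forall>y\<in>bowen_ball \<phi> M n x \<epsilon>. \<bar>f y - f x\<bar> \<le> \<alpha>"
  shows "\<exists>g. continuous_on M g \<and> (\<forall>x\<in>M. \<bar>f x - g x\<bar> \<le> \<alpha>)"
proof -
  define \<psi> where "\<psi> c y = (\<Prod>k<n. max 0 (\<epsilon> - dist ((\<phi>^^k) y) ((\<phi>^^k) c)))" for c y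
  have contpsi: "continuous_on M (\<psi> c)" for c
    unfolding \<psi>_def
    apply (intro continuous_intros)
    using funpow_cont[OF assms(2,3)] by auto
  have psinn: "\<psi> c y \<ge> 0" for c y unfolding \<psi>_def by (intro prod_nonneg) auto
  have psipos: "\<psi> c y > 0" if "y \<in> M" "c \<in> M" "y \<in> bowen_ball \<phi> M n c \<epsilon>" for c y
    unfolding \<psi>_def using that by (intro prod_pos) (auto simp: bowen_ball_def)
  have psiball: "y \<in> bowen_ball \<phi> M n c \<epsilon>" if "y \<in> M" "\<psi> c y \<noteq> 0" for c y
  proof -
    have "\<forall>k<n. max 0 (\<epsilon> - dist ((\<phi>^^k) y) ((\<phi>^^k) c)) \<noteq> 0"
      using that(2) unfolding \<psi>_def by (auto simp: prod_zero_iff)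
    then show ?thesis using that(1) by (auto simp: bowen_ball_def max_def split: if_splits)
  qed
  define U where "U c = M \<inter> \<psi> c -` {0<..}" for c
  have openU: "openin (top_of_set M) (U c)" for c
    unfolding U_def by (rule continuous_openin_preimage_gen[OF contpsi]) simp
  have "compactin (top_of_set M) M"
    using assms(1) by (simp add: compactin_subtopology)
  moreover have "M \<subseteq> \<Union>(U ` M)"
  proof
    fix x assume "x \<in> M"
    moreover have "x \<in> bowen_ball \<phi> M n x \<epsilon>" using \<open>x \<in> M\<close> assms(7) by (simp add: bowen_ball_def)
    ultimately show "x \<in> \<Union>(U ` M)" using psipos unfolding U_def by fastforce
  qed
  ultimately have "\<exists>F. finite F \<and> F \<subseteq> U ` M \<and> M \<subseteq> \<Union>F"
  proof -
    assume cpt: "compactin (top_of_set M) M" and cov: "M \<subseteq> \<Union>(U ` M)"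
    have H: "\<forall>\<U>. (\<forall>B\<in>\<U>. openin (top_of_set M) B) \<and> M \<subseteq> \<Union>\<U> \<longrightarrow>
         (\<exists>\<F>. finite \<F> \<and> \<F> \<subseteq> \<U> \<and> M \<subseteq> \<Union>\<F>)"
      using cpt unfolding compactin_def by (rule conjunct2)
    have "(\<forall>B\<in>U ` M. openin (top_of_set M) B) \<and> M \<subseteq> \<Union>(U ` M)"
      using openU cov by blast
    then show ?thesis using H by blast
  qed
  then obtain F where F: "finite F" "F \<subseteq> U ` M" "M \<subseteq> \<Union>F" by blast
  then obtain C where C: "C \<subseteq> M" "finite C" "F = U ` C"
    using finite_subset_image[OF F(1,2)] by blast
  define S where "S y = (\<Sum>c\<in>C. \<psi> c y)" for y
  have Spos: "S y > 0" if "y \<in> M" for y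
  proof -
    have "y \<in> \<Union>(U ` C)" using C(3) F(3) that by blast
    then obtain c where c: "c \<in> C" "y \<in> U c" by blast
    have "\<psi> c y \<le> S y" unfolding S_def using C(2) c(1) psinn by (intro member_le_sum) auto
    moreover have "\<psi> c y > 0" using c(2) by (simp add: U_def)
    ultimately show ?thesis by simp
  qed
  define g where "g y = (\<Sum>c\<in>C. \<psi> c y * f c) / S y" for y
  have "continuous_on M g"
    unfolding g_def S_def
    apply (intro continuous_intros contpsi)
    using Spos unfolding S_def by (metis order_less_irrefl)
  moreover have "\<bar>f x - g x\<bar> \<le> \<alpha>" if x: "x \<in> M" for x
  proof -
    have Sx: "S x > 0" using Spos x by blast
    have "f x - g x = (\<Sum>c\<in>C. \<psi> c x * (f x - f c)) / S x"
    proof -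
      have e: "(\<Sum>c\<in>C. \<psi> c x * (f x - f c)) = f x * S x - (\<Sum>c\<in>C. \<psi> c x * f c)"
        unfolding S_def by (simp add: right_diff_distrib sum_subtractf sum_distrib_left mult.commute)
      show ?thesis unfolding e g_def using Sx by (simp add: diff_divide_distrib)
    qed
    then have "\<bar>f x - g x\<bar> = \<bar>\<Sum>c\<in>C. \<psi> c x * (f x - f c)\<bar> / S x"
      using Sx by simp
    also have "\<dots> \<le> (\<Sum>c\<in>C. \<psi> c x * \<alpha>) / S x"
    proof (intro divide_right_mono order.trans[OF sum_abs] sum_mono)
      fix c assume c: "c \<in> C"
      show "\<bar>\<psi> c x * (f x - f c)\<bar> \<le> \<psi> c x * \<alpha>"
      proof (cases "\<psi> c x = 0")
        case True then show ?thesis by simp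
      next
        case False
        then have "x \<in> bowen_ball \<phi> M n c \<epsilon>" using psiball x by blast
        then have "\<bar>f x - f c\<bar> \<le> \<alpha>" using assms(9) C(1) c by fastforce
        then show ?thesis using psinn[of c x]
          by (simp add: abs_mult mult_left_mono)
      qed
    qed (use Sx in auto)
    also have "\<dots> = \<alpha>" using Sx unfolding S_def by (simp add: sum_distrib_right[symmetric])
    finally show ?thesis .
  qed
  ultimately show ?thesis by blast
qed

end
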